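(* Let $\alpha>0$. Every stochastically continuous $\alpha$-IDT process $(X_t;t\geq0)$ is temporally selfdecomposable of infinite order.
   Context: For $\alpha>0$, a stochastic process $X=(X_t;t\geq0)$ (real or $\mathbb{R}^d$-valued) is called an $\alpha$-IDT process if for every integer $n\geq1$, $(X_{n^{1/\alpha}t};t\geq0)\stackrel{(law)}{=}(X^{(1)}_t+\cdots+X^{(n)}_t;t\geq0)$, where $X^{(1)},\dots,X^{(n)}$ are independent copies of $X$; equality in law means equality of all finite-dimensional distributions. A process $X$ is temporally selfdecomposable if for every $c\in(0,1)$ there is a process $U^{(c)}=(U^{(c)}_t;t\ge0)$ (the $c$-residual), independent of an independent copy $X'$ of $X$, such that $(X_t;t\geq0)\stackrel{(law)}{=}(X'_{ct}+U^{(c)}_t;t\ge0)$. $X$ is temporally selfdecomposable of order $1$ if it is temporally selfdecomposable; of order $m+1$ if it is temporally selfdecomposable and, for every $c\in(0,1)$, its $c$-residual can be chosen temporally selfdecomposable of order $m$; and of infinite order if it is of order $m$ for every $m\ge1$. *)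

theory Defs
  imports "HOL-Probability.Probability"
begin

text \<open>Processes indexed by times t \<ge> 0, with values in a Euclidean space 'b
(covers real-valued and R^d-valued processes).\<close>

definition is_process :: "'a measure \<Rightarrow> (real \<Rightarrow> 'a \<Rightarrow> 'b::euclidean_space) \<Rightarrow> bool" where
  "is_process M X \<longleftrightarrow> (\<forall>t\<ge>0. X t \<in> borel_measurable M)"

definition paths :: "(real \<Rightarrow> 'b::euclidean_space) measure" where
  "paths = PiM {0..} (\<lambda>_. borel)"

definition fdd :: "'a measure \<Rightarrow> (real \<Rightarrow> 'a \<Rightarrow> 'b::euclidean_space) \<Rightarrow> real set
    \<Rightarrow> (real \<Rightarrow> 'b) measure" where
  "fdd M X I = distr M (PiM I (\<lambda>_. borel)) (\<lambda>\<omega>. \<lambda>t\<in>I. X t \<omega>)"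

definition eq_law :: "'a measure \<Rightarrow> (real \<Rightarrow> 'a \<Rightarrow> 'b::euclidean_space)
    \<Rightarrow> 'c measure \<Rightarrow> (real \<Rightarrow> 'c \<Rightarrow> 'b) \<Rightarrow> bool" where
  "eq_law M X N Y \<longleftrightarrow> (\<forall>I. finite I \<and> I \<subseteq> {0..} \<longrightarrow> fdd M X I = fdd N Y I)"

definition stoch_continuous :: "'a measure \<Rightarrow> (real \<Rightarrow> 'a \<Rightarrow> 'b::euclidean_space) \<Rightarrow> bool" where
  "stoch_continuous M X \<longleftrightarrow>
     (\<forall>t\<ge>0. \<forall>\<epsilon>>0. ((\<lambda>s. measure M {\<omega>\<in>space M. dist (X s \<omega>) (X t \<omega>) > \<epsilon>}) \<longlongrightarrow> 0)
        (at t within {0..}))"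

text \<open>The n independent copies are realised canonically as X(t, \<omega>_i) on the product
 space M^n (coordinates \<omega>_0, ..., \<omega>_{n-1}).\<close>
definition alpha_IDT :: "real \<Rightarrow> 'a measure \<Rightarrow> (real \<Rightarrow> 'a \<Rightarrow> 'b::euclidean_space) \<Rightarrow> bool" where
  "alpha_IDT \<alpha> M X \<longleftrightarrow>
     (\<forall>n::nat. n \<ge> 1 \<longrightarrow>
        eq_law M (\<lambda>t. X (real n powr (1/\<alpha>) * t))
               (PiM {..<n} (\<lambda>_. M)) (\<lambda>t \<omega>. \<Sum>i<n. X t (\<omega> i)))"

text \<open>Q is (the law on path space of) a c-residual of X: with X' an independent copy
 of X and U (coordinate process under Q) independent of X' (product space),
 X equals in law X'_{c t} + U_t.\<close>
definition TSD_residual :: "real \<Rightarrow> 'a measure \<Rightarrow> (real \<Rightarrow> 'a \<Rightarrow> 'b::euclidean_space)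
    \<Rightarrow> (real \<Rightarrow> 'b) measure \<Rightarrow> bool" where
  "TSD_residual c M X Q \<longleftrightarrow>
     prob_space Q \<and> sets Q = sets paths \<and>
     eq_law M X (M \<Otimes>\<^sub>M Q) (\<lambda>t (\<omega>, u). X (c * t) \<omega> + u t)"

fun tsd_paths :: "nat \<Rightarrow> (real \<Rightarrow> 'b::euclidean_space) measure \<Rightarrow> bool" where
  "tsd_paths 0 Q = True"
| "tsd_paths (Suc m) Q =
     (\<forall>c\<in>{0<..<1}. \<exists>R. TSD_residual c Q (\<lambda>t u. u t) R \<and> tsd_paths m R)"

definition TSD_order :: "nat \<Rightarrow> 'a measure \<Rightarrow> (real \<Rightarrow> 'a \<Rightarrow> 'b::euclidean_space) \<Rightarrow> bool" where
  "TSD_order m M X \<longleftrightarrow> m \<ge> 1 \<and>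
     (\<forall>c\<in>{0<..<1}. \<exists>Q. TSD_residual c M X Q \<and> tsd_paths (m - 1) Q)"

definition TSD_infinite_order :: "'a measure \<Rightarrow> (real \<Rightarrow> 'a \<Rightarrow> 'b::euclidean_space) \<Rightarrow> bool" where
  "TSD_infinite_order M X \<longleftrightarrow> (\<forall>m\<ge>1. TSD_order m M X)"

end

theory Submission
  imports Defs
begin


lemma vec_meas[measurable]:
  assumes "is_process N Z" "I \<subseteq> {0..}"
  shows "(\<lambda>\<omega>. \<lambda>t\<in>I. Z t \<omega>) \<in> measurable N (PiM I (\<lambda>_. borel))"
  using assms unfolding is_process_def
  by (intro measurable_restrict) auto

lemma eq_law_sym: "eq_law M X N Y \<Longrightarrow> eq_law N Y M X"
  unfolding eq_law_def by auto

lemma eq_law_trans: "eq_law M X N Y \<Longrightarrow> eq_law N Y P Z \<Longrightarrow> eq_law M X P Z"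
  unfolding eq_law_def by auto

lemma fdd_time_change:
  assumes X: "is_process M X" and g: "\<And>t. t \<ge> 0 \<Longrightarrow> g t \<ge> 0" and I: "I \<subseteq> {0..}"
  shows "fdd M (\<lambda>t. X (g t)) I =
    distr (fdd M X (g ` I)) (PiM I (\<lambda>_. borel)) (\<lambda>f. \<lambda>t\<in>I. f (g t))"
proof -
  have gI: "g ` I \<subseteq> {0..}" using g I by auto
  have h: "(\<lambda>f. \<lambda>t\<in>I. f (g t)) \<in> measurable (PiM (g ` I) (\<lambda>_. borel)) (PiM I (\<lambda>_. (borel::'b measure)))"
    by (intro measurable_restrict measurable_component_singleton) auto
  show ?thesis
    unfolding fdd_def
    apply (subst distr_distr[OF h vec_meas[OF X gI]])
    apply (rule distr_cong)
    apply (auto simp: o_def restrict_def fun_eq_iff)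
    done
qed

lemma eq_law_time_change:
  assumes X: "is_process M X" and Y: "is_process N Y" and e: "eq_law M X N Y"
    and g: "\<And>t. t \<ge> 0 \<Longrightarrow> g t \<ge> 0"
  shows "eq_law M (\<lambda>t. X (g t)) N (\<lambda>t. Y (g t))"
  unfolding eq_law_def
proof safe
  fix I :: "real set" assume I: "finite I" "I \<subseteq> {0..}"
  have "g ` I \<subseteq> {0..}" using g I by auto
  then have "fdd M X (g ` I) = fdd N Y (g ` I)" using e I unfolding eq_law_def by auto
  then show "fdd M (\<lambda>t. X (g t)) I = fdd N (\<lambda>t. Y (g t)) I"
    using fdd_time_change[OF X g I(2)] fdd_time_change[OF Y g I(2)] by simp
qed

lemma eq_law_preserving:
  assumes phi: "phi \<in> measurable N N'" "distr N N' phi = N'"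
    and Z': "is_process N' Z'"
    and eq: "\<And>t \<omega>. t \<ge> 0 \<Longrightarrow> \<omega> \<in> space N \<Longrightarrow> Z t \<omega> = Z' t (phi \<omega>)"
  shows "eq_law N Z N' Z'"
  unfolding eq_law_def
proof safe
  fix I :: "real set" assume I: "finite I" "I \<subseteq> {0..}"
  have "fdd N Z I = distr N (PiM I (\<lambda>_. borel)) ((\<lambda>\<omega>. \<lambda>t\<in>I. Z' t \<omega>) \<circ> phi)"
    unfolding fdd_def using I eq by (intro distr_cong) (auto simp: restrict_def fun_eq_iff)
  also have "\<dots> = distr (distr N N' phi) (PiM I (\<lambda>_. borel)) (\<lambda>\<omega>. \<lambda>t\<in>I. Z' t \<omega>)"
    by (rule distr_distr[symmetric, OF vec_meas[OF Z' I(2)] phi(1)])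
  finally show "fdd N Z I = fdd N' Z' I" unfolding fdd_def phi(2) .
qed

lemma fdd_pair:
  fixes A :: "real \<Rightarrow> 'a \<Rightarrow> 'b::euclidean_space" and B :: "real \<Rightarrow> 'c \<Rightarrow> 'b"
  assumes M1: "prob_space M1" and M2: "prob_space M2"
    and A: "is_process M1 A" and B: "is_process M2 B" and I: "I \<subseteq> {0..}"
  shows "fdd (M1 \<Otimes>\<^sub>M M2) (\<lambda>t (x,y). A t x + B t y) I =
     distr (fdd M1 A I \<Otimes>\<^sub>M fdd M2 B I) (PiM I (\<lambda>_. borel)) (\<lambda>(f,g). \<lambda>t\<in>I. f t + g t)"
proof -
  interpret p: pair_prob_space M1 M2 using M1 M2 by (simp add: pair_prob_space_def pair_sigma_finite_def prob_space_imp_sigma_finite)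
  have h: "(\<lambda>(f,g). \<lambda>t\<in>I. f t + g t) \<in> measurable (PiM I (\<lambda>_. borel) \<Otimes>\<^sub>M PiM I (\<lambda>_. borel)) (PiM I (\<lambda>_. (borel::'b measure)))"
  proof -
    have "(\<lambda>p. \<lambda>t\<in>I. fst p t + snd p t) \<in> measurable (PiM I (\<lambda>_. borel) \<Otimes>\<^sub>M PiM I (\<lambda>_. borel)) (PiM I (\<lambda>_. (borel::'b measure)))"
      by (intro measurable_restrict borel_measurable_add measurable_compose[OF measurable_fst measurable_component_singleton]
        measurable_compose[OF measurable_snd measurable_component_singleton])
    then show ?thesis by (simp add: case_prod_beta')
  qed
  have sf: "sigma_finite_measure (distr M2 (PiM I (\<lambda>_. borel)) (\<lambda>\<omega>. \<lambda>t\<in>I. B t \<omega>))"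
    using prob_space.prob_space_distr[OF M2 vec_meas[OF B I]] prob_space_imp_sigma_finite by blast
  have eqp: "fdd M1 A I \<Otimes>\<^sub>M fdd M2 B I = distr (M1 \<Otimes>\<^sub>M M2) (PiM I (\<lambda>_. borel) \<Otimes>\<^sub>M PiM I (\<lambda>_. borel))
      (\<lambda>(x,y). ((\<lambda>t\<in>I. A t x), (\<lambda>t\<in>I. B t y)))"
    unfolding fdd_def by (rule pair_measure_distr[OF vec_meas[OF A I] vec_meas[OF B I] sf])
  have pm: "(\<lambda>(x,y). ((\<lambda>t\<in>I. A t x), (\<lambda>t\<in>I. B t y))) \<in> measurable (M1 \<Otimes>\<^sub>M M2) (PiM I (\<lambda>_. borel) \<Otimes>\<^sub>M PiM I (\<lambda>_. borel))"
    using vec_meas[OF A I] vec_meas[OF B I] by (auto simp: case_prod_beta)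
  show ?thesis
    unfolding eqp distr_distr[OF h pm] unfolding fdd_def
    by (intro distr_cong) (auto simp: restrict_def)
qed


lemma prod_split_nat: fixes m k :: nat shows "(\<Prod>i<m. f i) * (\<Prod>j<k. f (j+m)) = (\<Prod>i<m+k. (f i :: 'a::comm_monoid_mult))"
  proof (induction k)
  case (Suc k) then show ?case by (simp add: mult.assoc[symmetric] add.commute)
qed simp

lemma sum_split_nat: fixes m k :: nat shows "(\<Sum>i<m. f i) + (\<Sum>j<k. f (j+m)) = (\<Sum>i<m+k. (f i :: 'a::comm_monoid_add))"
  proof (induction k)
  case (Suc k) then show ?case by (simp add: add.assoc[symmetric] add.commute)
qed simp

definition psi :: "nat \<Rightarrow> nat \<Rightarrow> (nat \<Rightarrow> 'a) \<times> (nat \<Rightarrow> 'a) \<Rightarrow> nat \<Rightarrow> 'a" where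
  "psi m k = (\<lambda>(x,y). \<lambda>i\<in>{..<m+k}. if i < m then x i else y (i - m))"

lemma psi_meas:
  "psi m k \<in> measurable (PiM {..<m} (\<lambda>_. M) \<Otimes>\<^sub>M PiM {..<k} (\<lambda>_. M)) (PiM {..<m+k} (\<lambda>_. M))"
proof -
  have "(\<lambda>p. \<lambda>i\<in>{..<m+k}. if i < m then fst p i else snd p (i - m))
     \<in> measurable (PiM {..<m} (\<lambda>_. M) \<Otimes>\<^sub>M PiM {..<k} (\<lambda>_. M)) (PiM {..<m+k} (\<lambda>_. M))"
  proof (intro measurable_restrict)
    fix i assume i: "i \<in> {..<m+k}"
    show "(\<lambda>p. if i < m then fst p i else snd p (i - m)) \<in> measurable (PiM {..<m} (\<lambda>_. M) \<Otimes>\<^sub>M PiM {..<k} (\<lambda>_. M)) M"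
    proof (cases "i < m")
      case True then show ?thesis
        by (simp add: measurable_compose[OF measurable_fst measurable_component_singleton])
    next
      case False then show ?thesis using i
        by (simp add: measurable_compose[OF measurable_snd measurable_component_singleton])
    qed
  qed
  then show ?thesis unfolding psi_def by (simp add: case_prod_beta')
qed

lemma distr_psi:
  assumes M: "prob_space M"
  shows "distr (PiM {..<m} (\<lambda>_. M) \<Otimes>\<^sub>M PiM {..<k} (\<lambda>_. M)) (PiM {..<m+k} (\<lambda>_. M)) (psi m k)
     = PiM {..<m+k} (\<lambda>_. M)"
proof -
  interpret product_prob_space "\<lambda>_::nat. M" using M by (simp add: product_prob_space_def product_prob_space_axioms_def product_sigma_finite_def prob_space_imp_sigma_finite)
  interpret Pm: prob_space "PiM {..<m} (\<lambda>_. M)" by (rule prob_space_PiM) (use M in auto)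
  interpret Pk: prob_space "PiM {..<k} (\<lambda>_. M)" by (rule prob_space_PiM) (use M in auto)
  interpret PP: pair_sigma_finite "PiM {..<m} (\<lambda>_. M)" "PiM {..<k} (\<lambda>_. M)"
    by (simp add: pair_sigma_finite_def Pm.sigma_finite_measure_axioms Pk.sigma_finite_measure_axioms)
  show ?thesis
  proof (rule PiM_eqI)
    fix A assume A: "\<And>i. i \<in> {..<m+k} \<Longrightarrow> A i \<in> sets M"
    have pre: "psi m k -` Pi\<^sub>E {..<m+k} A \<inter> space (PiM {..<m} (\<lambda>_. M) \<Otimes>\<^sub>M PiM {..<k} (\<lambda>_. M))
       = Pi\<^sub>E {..<m} A \<times> Pi\<^sub>E {..<k} (\<lambda>j. A (j+m))"
      using A[THEN sets.sets_into_space]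
      apply (auto simp: psi_def space_pair_measure space_PiM PiE_iff split: if_splits)
      subgoal for a b xa by (drule bspec[of _ _ "xa+m"]) auto
      subgoal for a b i by (drule bspec[of _ _ "i-m"]) auto
      subgoal for a b x by (metis lessThan_iff subsetD trans_less_add1)
      subgoal for a b x by (metis add.commute add_less_cancel_left lessThan_iff subsetD)
      done
    have "emeasure (PiM {..<m} (\<lambda>_. M) \<Otimes>\<^sub>M PiM {..<k} (\<lambda>_. M)) (Pi\<^sub>E {..<m} A \<times> Pi\<^sub>E {..<k} (\<lambda>j. A (j+m)))
       = (\<Prod>i<m. emeasure M (A i)) * (\<Prod>j<k. emeasure M (A (j+m)))"
    proof -
      have s1: "Pi\<^sub>E {..<m} A \<in> sets (PiM {..<m} (\<lambda>_. M))" using A by (intro sets_PiM_I_finite) auto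
      have s2: "Pi\<^sub>E {..<k} (\<lambda>j. A (j+m)) \<in> sets (PiM {..<k} (\<lambda>_. M))" using A by (intro sets_PiM_I_finite) auto
      show ?thesis
        apply (subst Pk.emeasure_pair_measure_Times[OF s1 s2])
        apply (subst emeasure_PiM, simp, use A in simp)
        apply (subst emeasure_PiM, simp, use A in simp)
        apply simp
        done
    qed
    then show "emeasure (distr (PiM {..<m} (\<lambda>_. M) \<Otimes>\<^sub>M PiM {..<k} (\<lambda>_. M)) (PiM {..<m+k} (\<lambda>_. M)) (psi m k)) (Pi\<^sub>E {..<m+k} A)
       = (\<Prod>i<m+k. emeasure M (A i))"
      using A prod_split_nat[of "\<lambda>i. emeasure M (A i)" m k] by (simp add: emeasure_distr[OF psi_meas] sets_PiM_I_finite pre)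
  qed (simp_all)
qed


lemma is_process_sum:
  assumes "is_process M Y"
  shows "is_process (PiM {..<n} (\<lambda>_. M)) (\<lambda>t \<omega>. \<Sum>i<n. Y t (\<omega> i))"
  using assms unfolding is_process_def
  by (auto intro!: borel_measurable_sum measurable_compose[OF measurable_component_singleton])

lemma is_process_pair:
  assumes "is_process M1 A" "is_process M2 B"
  shows "is_process (M1 \<Otimes>\<^sub>M M2) (\<lambda>t (x,y). A t x + B t y)"
  using assms unfolding is_process_def
  by (auto simp: case_prod_beta' intro!: borel_measurable_add measurable_compose[OF measurable_fst] measurable_compose[OF measurable_snd])

lemma is_process_time:
  assumes "is_process M X" "\<And>t. t \<ge> 0 \<Longrightarrow> g t \<ge> 0"
  shows "is_process M (\<lambda>t. X (g t))"
  using assms unfolding is_process_def by auto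

lemma eq_law_pair:
  fixes A :: "real \<Rightarrow> 'a \<Rightarrow> 'b::euclidean_space" and B :: "real \<Rightarrow> 'c \<Rightarrow> 'b"
    and A' :: "real \<Rightarrow> 'd \<Rightarrow> 'b" and B' :: "real \<Rightarrow> 'e \<Rightarrow> 'b"
  assumes "prob_space M1" "prob_space M2" "prob_space N1" "prob_space N2"
    and "is_process M1 A" "is_process M2 B" "is_process N1 A'" "is_process N2 B'"
    and e1: "eq_law M1 A N1 A'" and e2: "eq_law M2 B N2 B'"
  shows "eq_law (M1 \<Otimes>\<^sub>M M2) (\<lambda>t (x,y). A t x + B t y) (N1 \<Otimes>\<^sub>M N2) (\<lambda>t (x,y). A' t x + B' t y)"
  unfolding eq_law_def
proof safe
  fix I :: "real set" assume I: "finite I" "I \<subseteq> {0..}"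
  have "fdd M1 A I = fdd N1 A' I" "fdd M2 B I = fdd N2 B' I" using e1 e2 I unfolding eq_law_def by auto
  then show "fdd (M1 \<Otimes>\<^sub>M M2) (\<lambda>t (x,y). A t x + B t y) I = fdd (N1 \<Otimes>\<^sub>M N2) (\<lambda>t (x,y). A' t x + B' t y) I"
    using fdd_pair[of M1 M2 A B I] fdd_pair[of N1 N2 A' B' I] assms I by simp
qed

lemma eq_law_split:
  fixes m k :: nat and M :: "'a measure" and Y :: "real \<Rightarrow> 'a \<Rightarrow> 'b::euclidean_space"
  assumes M: "prob_space M" and Y: "is_process M Y"
  shows "eq_law (PiM {..<m} (\<lambda>_. M) \<Otimes>\<^sub>M PiM {..<k} (\<lambda>_. M))
     (\<lambda>t (x,y). (\<Sum>i<m. Y t (x i)) + (\<Sum>i<k. Y t (y i)))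
     (PiM {..<m+k} (\<lambda>_. M)) (\<lambda>t \<omega>. \<Sum>i<m+k. Y t (\<omega> i))"
proof (rule eq_law_preserving[where phi="psi m k" and Z'="\<lambda>t \<omega>. \<Sum>i<m+k. Y t (\<omega> i)", OF psi_meas distr_psi[OF M] is_process_sum[OF Y]])
  fix t :: real and p :: "(nat \<Rightarrow> 'a) \<times> (nat \<Rightarrow> 'a)"
  obtain x y where p: "p = (x,y)" by force
  have "(\<Sum>i<m+k. Y t (psi m k (x,y) i)) = (\<Sum>i<m. Y t (psi m k (x,y) i)) + (\<Sum>j<k. Y t (psi m k (x,y) (j+m)))"
    by (rule sum_split_nat[symmetric])
  also have "\<dots> = (\<Sum>i<m. Y t (x i)) + (\<Sum>i<k. Y t (y i))"
    by (simp add: psi_def)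
  finally show "(case p of (x, y) \<Rightarrow> (\<Sum>i<m. Y t (x i)) + (\<Sum>i<k. Y t (y i))) = (\<Sum>i<m + k. Y t (psi m k p i))"
    unfolding p by simp
qed

lemma eq_law_one:
  assumes M: "prob_space M" and Y: "is_process M Y"
  shows "eq_law (PiM {..<Suc 0} (\<lambda>_. M)) (\<lambda>t \<omega>. \<Sum>i<Suc 0. Y t (\<omega> i)) M Y"
proof (rule eq_law_preserving[where phi="\<lambda>\<omega>. \<omega> 0"])
  show "(\<lambda>\<omega>. \<omega> 0) \<in> measurable (PiM {..<Suc 0} (\<lambda>_. M)) M" by (rule measurable_component_singleton) auto
  show "distr (PiM {..<Suc 0} (\<lambda>_. M)) M (\<lambda>\<omega>. \<omega> 0) = M"
    using distr_PiM_component[of "{..<Suc 0}" "\<lambda>_. M" 0] M by simp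
qed (use Y in auto)

lemma eq_law_sum:
  fixes X :: "real \<Rightarrow> 'a \<Rightarrow> 'b::euclidean_space" and Y :: "real \<Rightarrow> 'c \<Rightarrow> 'b"
  assumes M: "prob_space M" and N: "prob_space N" and X: "is_process M X" and Y: "is_process N Y"
    and e: "eq_law M X N Y"
  shows "eq_law (PiM {..<Suc n} (\<lambda>_. M)) (\<lambda>t \<omega>. \<Sum>i<Suc n. X t (\<omega> i))
                (PiM {..<Suc n} (\<lambda>_. N)) (\<lambda>t \<omega>. \<Sum>i<Suc n. Y t (\<omega> i))"
proof (induction n)
  case 0
  show ?case
    using eq_law_one[OF M X] eq_law_one[OF N Y] e
    by (meson eq_law_sym eq_law_trans)
next
  case (Suc n)
  have PM: "\<And>j. prob_space (PiM {..<j} (\<lambda>_. M))" by (rule prob_space_PiM) (use M in auto)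
  have PN: "\<And>j. prob_space (PiM {..<j} (\<lambda>_. N))" by (rule prob_space_PiM) (use N in auto)
  have b: "eq_law (PiM {..<Suc 0} (\<lambda>_. M)) (\<lambda>t \<omega>. \<Sum>i<Suc 0. X t (\<omega> i))
                (PiM {..<Suc 0} (\<lambda>_. N)) (\<lambda>t \<omega>. \<Sum>i<Suc 0. Y t (\<omega> i))"
    using eq_law_one[OF M X] eq_law_one[OF N Y] e
    by (meson eq_law_sym eq_law_trans)
  have p: "eq_law (PiM {..<Suc n} (\<lambda>_. M) \<Otimes>\<^sub>M PiM {..<Suc 0} (\<lambda>_. M))
     (\<lambda>t (x,y). (\<Sum>i<Suc n. X t (x i)) + (\<Sum>i<Suc 0. X t (y i)))
     (PiM {..<Suc n} (\<lambda>_. N) \<Otimes>\<^sub>M PiM {..<Suc 0} (\<lambda>_. N))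
     (\<lambda>t (x,y). (\<Sum>i<Suc n. Y t (x i)) + (\<Sum>i<Suc 0. Y t (y i)))"
    by (rule eq_law_pair[OF PM PM PN PN is_process_sum[OF X] is_process_sum[OF X]
          is_process_sum[OF Y] is_process_sum[OF Y] Suc.IH b])
  note s1 = eq_law_split[OF M X, of "Suc n" "Suc 0"]
  note s2 = eq_law_split[OF N Y, of "Suc n" "Suc 0"]
  show ?case
    using eq_law_trans[OF eq_law_trans[OF eq_law_sym[OF s1] p] s2] by simp
qed



lemma fdd_eq_closed:
  fixes P Q :: "(real \<Rightarrow> 'b::euclidean_space) measure"
  assumes I: "finite I" and sP: "sets P = sets (PiM I (\<lambda>_. borel))" and sQ: "sets Q = sets (PiM I (\<lambda>_. borel))"
    and fP: "finite_measure P"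
    and eq: "\<And>F. (\<forall>i\<in>I. closed (F i)) \<Longrightarrow> emeasure P (PiE I F) = emeasure Q (PiE I F)"
  shows "P = Q"
proof -
  define \<Omega> where "\<Omega> = PiE I (\<lambda>_. UNIV :: 'b set)"
  define G where "G = {{f\<in>\<Omega>. \<forall>i\<in>j. f i \<in> A i} | A j. j \<in> {I} \<and> A \<in> Pi j (\<lambda>_. Collect closed)}"
  have key: "\<And>A. {f\<in>\<Omega>. \<forall>i\<in>I. f i \<in> A i} = PiE I A" unfolding \<Omega>_def by (auto simp: PiE_iff extensional_def)
  have G_eq: "G = {PiE I A | A. \<forall>i\<in>I. closed (A i)}"
    unfolding G_def key by (auto simp: key Pi_iff)
  have GP: "G \<subseteq> Pow \<Omega>" unfolding G_eq \<Omega>_def by (auto simp: PiE_iff)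
  have "sets (PiM I (\<lambda>_. sigma (UNIV::'b set) (Collect closed))) = sets (sigma \<Omega> G)"
    unfolding \<Omega>_def G_def
    by (rule sets_PiM_sigma) (auto intro!: exI[of _ "{UNIV}"] simp: I)
  then have S: "sets (PiM I (\<lambda>_. borel :: 'b measure)) = sigma_sets \<Omega> G"
    using GP by (simp add: borel_eq_closed)
  have Int: "Int_stable G" unfolding G_eq Int_stable_def
  proof safe
    fix A B :: "real \<Rightarrow> 'b set" assume A: "\<forall>i\<in>I. closed (A i)" and B: "\<forall>i\<in>I. closed (B i)"
    show "\<exists>C. PiE I A \<inter> PiE I B = PiE I C \<and> (\<forall>i\<in>I. closed (C i))"
      using A B by (intro exI[of _ "\<lambda>i. A i \<inter> B i"]) (auto simp: PiE_Int)
  qed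
  show ?thesis
  proof (rule measure_eqI_generator_eq[OF Int GP _ _ _ _ _])
    fix X assume "X \<in> G"
    then obtain A where "X = PiE I A" "\<forall>i\<in>I. closed (A i)" unfolding G_eq by auto
    then show "emeasure P X = emeasure Q X" using eq by simp
  next
    show "sets P = sigma_sets \<Omega> G" using sP S by simp
    show "sets Q = sigma_sets \<Omega> G" using sQ S by simp
    show "range (\<lambda>_::nat. \<Omega>) \<subseteq> G" unfolding G_eq \<Omega>_def by auto
    show "(\<Union>i::nat. \<Omega>) = \<Omega>" by simp
    show "emeasure P \<Omega> \<noteq> \<infinity>" for i::nat using finite_measure.emeasure_finite[OF fP] by simp
  qed
qed

lemma measure_fdd_box:
  assumes Z: "is_process N Z" and I: "finite I" "I \<subseteq> {0..}" and G: "\<And>i. i \<in> I \<Longrightarrow> G i \<in> sets borel"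
  shows "measure (fdd N Z I) (PiE I G) = measure N {\<omega>\<in>space N. \<forall>i\<in>I. Z i \<omega> \<in> G i}"
proof -
  have "PiE I G \<in> sets (PiM I (\<lambda>_. borel))" using I G by (intro sets_PiM_I_finite) auto
  then show ?thesis unfolding fdd_def
    by (subst measure_distr[OF vec_meas[OF Z I(2)]]) (auto intro!: arg_cong[where f="measure N"])
qed

lemma sets_box_all:
  assumes Z: "is_process N Z" and I: "finite I" "I \<subseteq> {0..}" and G: "\<And>i. i \<in> I \<Longrightarrow> G i \<in> sets borel"
  shows "{\<omega>\<in>space N. \<forall>i\<in>I. Z i \<omega> \<in> G i} \<in> sets N"
proof (rule sets.sets_Collect_finite_All[OF _ I(1)])
  fix i assume i: "i \<in> I"
  have "Z i \<in> borel_measurable N" using Z i I unfolding is_process_def by auto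
  then have "Z i -` G i \<inter> space N \<in> sets N" using G[OF i] by (rule measurable_sets)
  moreover have "{\<omega>\<in>space N. Z i \<omega> \<in> G i} = Z i -` G i \<inter> space N" by auto
  ultimately show "{\<omega>\<in>space N. Z i \<omega> \<in> G i} \<in> sets N" by simp
qed

lemma closed_infdist_le: "closed {x. infdist x F \<le> e}"
  by (intro closed_Collect_le continuous_on_infdist continuous_on_id continuous_on_const)

lemma box_ineq:
  fixes A B :: "real \<Rightarrow> 'a \<Rightarrow> 'b::euclidean_space"
  assumes N: "prob_space N" and A: "is_process N A" and B: "is_process N B" and I: "finite I" "I \<subseteq> {0..}"
  shows "measure N {\<omega>\<in>space N. \<forall>i\<in>I. A i \<omega> \<in> F i} \<le>
     measure N {\<omega>\<in>space N. \<forall>i\<in>I. B i \<omega> \<in> {x. infdist x (F i) \<le> e}}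
     + (\<Sum>i\<in>I. measure N {\<omega>\<in>space N. dist (A i \<omega>) (B i \<omega>) > e})"
proof -
  interpret prob_space N by fact
  define S where "S = {\<omega>\<in>space N. \<forall>i\<in>I. B i \<omega> \<in> {x. infdist x (F i) \<le> e}}"
  define D where "D i = {\<omega>\<in>space N. dist (A i \<omega>) (B i \<omega>) > e}" for i
  have Ssets: "S \<in> sets N" unfolding S_def
    by (rule sets_box_all[OF B I]) (simp add: closed_infdist_le)
  have Dsets: "D i \<in> sets N" if "i \<in> I" for i
  proof -
    have "A i \<in> borel_measurable N" "B i \<in> borel_measurable N" using A B that I unfolding is_process_def by auto
    then show ?thesis unfolding D_def by measurable
  qed
  have sub: "{\<omega>\<in>space N. \<forall>i\<in>I. A i \<omega> \<in> F i} \<subseteq> S \<union> (\<Union>i\<in>I. D i)"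
  proof
    fix \<omega> assume w: "\<omega> \<in> {\<omega>\<in>space N. \<forall>i\<in>I. A i \<omega> \<in> F i}"
    show "\<omega> \<in> S \<union> (\<Union>i\<in>I. D i)"
    proof (cases "\<exists>i\<in>I. dist (A i \<omega>) (B i \<omega>) > e")
      case True then show ?thesis using w unfolding D_def by auto
    next
      case False
      have "infdist (B i \<omega>) (F i) \<le> e" if "i \<in> I" for i
      proof -
        have "infdist (B i \<omega>) (F i) \<le> dist (B i \<omega>) (A i \<omega>)" using w that by (intro infdist_le) auto
        moreover have "dist (A i \<omega>) (B i \<omega>) \<le> e" using False that by auto
        ultimately show ?thesis by (simp add: dist_commute)
      qed
      then show ?thesis using w unfolding S_def by auto
    qed
  qed
  have "measure N {\<omega>\<in>space N. \<forall>i\<in>I. A i \<omega> \<in> F i} \<le> measure N (S \<union> (\<Union>i\<in>I. D i))"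
    by (rule finite_measure_mono[OF sub]) (use Ssets Dsets I in auto)
  also have "\<dots> \<le> measure N S + measure N (\<Union>i\<in>I. D i)"
    by (rule measure_Un_le) (use Ssets Dsets I in auto)
  also have "measure N (\<Union>i\<in>I. D i) \<le> (\<Sum>i\<in>I. measure N (D i))"
    by (rule finite_measure_subadditive_finite) (use Dsets I in auto)
  finally show ?thesis unfolding S_def D_def by simp
qed

lemma box_limit:
  fixes R :: "(real \<Rightarrow> 'b::euclidean_space) measure"
  assumes R: "finite_measure R" "sets R = sets (PiM I (\<lambda>_. borel))" and I: "finite I"
    and F: "\<And>i. i \<in> I \<Longrightarrow> closed (F i)" "\<And>i. i \<in> I \<Longrightarrow> F i \<noteq> {}"
  shows "(\<lambda>j. measure R (PiE I (\<lambda>i. {x. infdist x (F i) \<le> 1 / Suc j}))) \<longlonglongrightarrow> measure R (PiE I F)"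
proof -
  interpret finite_measure R by fact
  define C where "C j = PiE I (\<lambda>i. {x. infdist x (F i) \<le> 1 / Suc j})" for j :: nat
  have "(\<lambda>j. measure R (C j)) \<longlonglongrightarrow> measure R (\<Inter>j. C j)"
  proof (rule finite_Lim_measure_decseq)
    show "range C \<subseteq> sets R" unfolding C_def R(2) using I
      by (auto intro!: sets_PiM_I_finite borel_closed closed_infdist_le)
    show "decseq C" unfolding decseq_def C_def
    proof (intro allI impI subsetI)
      fix m n :: nat and x assume mn: "m \<le> n" and x: "x \<in> PiE I (\<lambda>i. {x. infdist x (F i) \<le> 1 / Suc n})"
      have "1 / real (Suc n) \<le> 1 / real (Suc m)" using mn by (simp add: frac_le)
      then show "x \<in> PiE I (\<lambda>i. {x. infdist x (F i) \<le> 1 / Suc m})" using x by (auto simp: PiE_iff)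
    qed
  qed
  moreover have "(\<Inter>j. C j) = PiE I F"
  proof (intro set_eqI iffI)
    fix x assume x: "x \<in> (\<Inter>j. C j)"
    have "x i \<in> F i" if i: "i \<in> I" for i
    proof -
      have le: "infdist (x i) (F i) \<le> 1 / Suc j" for j using x i unfolding C_def by (auto simp: PiE_iff)
      have "infdist (x i) (F i) \<le> 0"
      proof (rule field_le_epsilon)
        fix e :: real assume e: "e > 0"
        obtain j :: nat where "1 / Suc j < e" using e by (metis nat_approx_posE)
        then show "infdist (x i) (F i) \<le> 0 + e" using le[of j] by simp
      qed
      then have "infdist (x i) (F i) = 0" using infdist_nonneg[of "x i" "F i"] by simp
      then show ?thesis using in_closed_iff_infdist_zero[OF F(1)[OF i] F(2)[OF i]] by simp
    qed
    moreover have "x \<in> extensional I" using x unfolding C_def by (auto simp: PiE_iff)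
    ultimately show "x \<in> PiE I F" by (auto simp: PiE_iff)
  next
    fix x assume x: "x \<in> PiE I F"
    show "x \<in> (\<Inter>j. C j)" unfolding C_def using x
      by (auto simp: PiE_iff in_closed_iff_infdist_zero[OF F(1) F(2)])
  qed
  ultimately show ?thesis unfolding C_def by simp
qed



lemma le_of_lim_add: fixes a b :: real assumes "\<And>k. a \<le> b + s k" "s \<longlonglongrightarrow> 0" shows "a \<le> b"
proof -
  have "(\<lambda>k. b + s k) \<longlonglongrightarrow> b + 0" by (intro tendsto_add tendsto_const assms(2))
  then show ?thesis using assms(1) by (intro LIMSEQ_le_const) auto
qed

lemma le_of_lim: fixes a :: real assumes "\<And>k. a \<le> b k" "b \<longlonglongrightarrow> c" shows "a \<le> c"
  using assms by (intro LIMSEQ_le_const[OF assms(2)]) auto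

lemma limit_law:
  fixes X :: "real \<Rightarrow> 'a \<Rightarrow> 'b::euclidean_space" and Z :: "real \<Rightarrow> 'c \<Rightarrow> 'b"
    and Zs :: "nat \<Rightarrow> real \<Rightarrow> 'c \<Rightarrow> 'b"
  assumes M: "prob_space M" and N: "prob_space N" and X: "is_process M X" and Z: "is_process N Z"
    and Zs: "\<And>k. is_process N (Zs k)" and e: "\<And>k. eq_law M X N (Zs k)"
    and conv: "\<And>t \<epsilon>. t \<ge> 0 \<Longrightarrow> \<epsilon> > 0 \<Longrightarrow>
        (\<lambda>k. measure N {\<omega>\<in>space N. dist (Zs k t \<omega>) (Z t \<omega>) > \<epsilon>}) \<longlonglongrightarrow> 0"
  shows "eq_law M X N Z"
  unfolding eq_law_def
proof safe
  fix I :: "real set" assume I: "finite I" "I \<subseteq> {0..}"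
  define \<mu> where "\<mu> = fdd M X I"
  define \<nu> where "\<nu> = fdd N Z I"
  have muk: "\<mu> = fdd N (Zs k) I" for k using e I unfolding eq_law_def \<mu>_def by auto
  have pmu: "prob_space \<mu>" unfolding \<mu>_def fdd_def by (rule prob_space.prob_space_distr[OF M vec_meas[OF X I(2)]])
  have pnu: "prob_space \<nu>" unfolding \<nu>_def fdd_def by (rule prob_space.prob_space_distr[OF N vec_meas[OF Z I(2)]])
  have smu: "sets \<mu> = sets (PiM I (\<lambda>_. borel))" unfolding \<mu>_def fdd_def by simp
  have snu: "sets \<nu> = sets (PiM I (\<lambda>_. borel))" unfolding \<nu>_def fdd_def by simp
  have s0: "(\<lambda>k. \<Sum>i\<in>I. measure N {\<omega>\<in>space N. dist (Zs k i \<omega>) (Z i \<omega>) > \<epsilon>}) \<longlonglongrightarrow> 0" if "\<epsilon> > 0" for \<epsilon>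
    using tendsto_sum[of I "\<lambda>i k. measure N {\<omega>\<in>space N. dist (Zs k i \<omega>) (Z i \<omega>) > \<epsilon>}" "\<lambda>_. 0" sequentially]
      conv I that by auto
  have s0': "(\<lambda>k. \<Sum>i\<in>I. measure N {\<omega>\<in>space N. dist (Z i \<omega>) (Zs k i \<omega>) > \<epsilon>}) \<longlonglongrightarrow> 0" if "\<epsilon> > 0" for \<epsilon>
    using s0[OF that] by (simp add: dist_commute)
  show "\<mu> = \<nu>" unfolding \<mu>_def[symmetric] \<nu>_def[symmetric]
  proof (rule fdd_eq_closed[OF I(1) smu snu])
    show "finite_measure \<mu>" using pmu by (simp add: prob_space_def)
    fix F :: "real \<Rightarrow> 'b set" assume F: "\<forall>i\<in>I. closed (F i)"
    show "emeasure \<mu> (PiE I F) = emeasure \<nu> (PiE I F)"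
    proof (cases "\<exists>i\<in>I. F i = {}")
      case True
      then have "PiE I F = {}" by (auto simp: PiE_eq_empty_iff)
      then show ?thesis by simp
    next
      case False
      define C where "C j = PiE I (\<lambda>i. {x. infdist x (F i) \<le> 1 / real (Suc j)})" for j
      have Fb: "F i \<in> sets borel" if "i \<in> I" for i using F that by auto
      have Cb: "{x. infdist x (F i) \<le> e} \<in> sets borel" for i e by (intro borel_closed closed_infdist_le)
      have e_pos: "1 / real (Suc j) > 0" for j by simp
      have lim_nu: "(\<lambda>j. measure \<nu> (C j)) \<longlonglongrightarrow> measure \<nu> (PiE I F)" unfolding C_def
        by (rule box_limit) (use pnu snu I F False in \<open>auto simp: prob_space_def\<close>)
      have lim_mu: "(\<lambda>j. measure \<mu> (C j)) \<longlonglongrightarrow> measure \<mu> (PiE I F)" unfolding C_def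
        by (rule box_limit) (use pmu smu I F False in \<open>auto simp: prob_space_def\<close>)
      have a: "measure \<mu> (PiE I F) \<le> measure \<nu> (C j)" for j
      proof (rule le_of_lim_add[OF _ s0[OF e_pos[of j]]])
        fix k
        have "measure \<mu> (PiE I F) = measure N {\<omega>\<in>space N. \<forall>i\<in>I. Zs k i \<omega> \<in> F i}"
          unfolding muk[of k] by (rule measure_fdd_box[OF Zs I Fb])
        also have "\<dots> \<le> measure N {\<omega>\<in>space N. \<forall>i\<in>I. Z i \<omega> \<in> {x. infdist x (F i) \<le> 1 / real (Suc j)}}
           + (\<Sum>i\<in>I. measure N {\<omega>\<in>space N. dist (Zs k i \<omega>) (Z i \<omega>) > 1 / real (Suc j)})"
          by (rule box_ineq[OF N Zs Z I])
        also have "measure N {\<omega>\<in>space N. \<forall>i\<in>I. Z i \<omega> \<in> {x. infdist x (F i) \<le> 1 / real (Suc j)}} = measure \<nu> (C j)"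
          unfolding \<nu>_def C_def by (rule measure_fdd_box[OF Z I Cb, symmetric])
        finally show "measure \<mu> (PiE I F) \<le> measure \<nu> (C j) + (\<Sum>i\<in>I. measure N {\<omega>\<in>space N. dist (Zs k i \<omega>) (Z i \<omega>) > 1 / real (Suc j)})" .
      qed
      have b: "measure \<nu> (PiE I F) \<le> measure \<mu> (C j)" for j
      proof (rule le_of_lim_add[OF _ s0'[OF e_pos[of j]]])
        fix k
        have "measure \<nu> (PiE I F) = measure N {\<omega>\<in>space N. \<forall>i\<in>I. Z i \<omega> \<in> F i}"
          unfolding \<nu>_def by (rule measure_fdd_box[OF Z I Fb])
        also have "\<dots> \<le> measure N {\<omega>\<in>space N. \<forall>i\<in>I. Zs k i \<omega> \<in> {x. infdist x (F i) \<le> 1 / real (Suc j)}}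
           + (\<Sum>i\<in>I. measure N {\<omega>\<in>space N. dist (Z i \<omega>) (Zs k i \<omega>) > 1 / real (Suc j)})"
          by (rule box_ineq[OF N Z Zs I])
        also have "measure N {\<omega>\<in>space N. \<forall>i\<in>I. Zs k i \<omega> \<in> {x. infdist x (F i) \<le> 1 / real (Suc j)}} = measure \<mu> (C j)"
          unfolding muk[of k] C_def by (rule measure_fdd_box[OF Zs I Cb, symmetric])
        finally show "measure \<nu> (PiE I F) \<le> measure \<mu> (C j) + (\<Sum>i\<in>I. measure N {\<omega>\<in>space N. dist (Z i \<omega>) (Zs k i \<omega>) > 1 / real (Suc j)})" .
      qed
      have "measure \<mu> (PiE I F) = measure \<nu> (PiE I F)"
        using le_of_lim[OF a lim_nu] le_of_lim[OF b lim_mu] by simp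
      then show ?thesis using pmu pnu by (simp add: finite_measure.emeasure_eq_measure prob_space_def)
    qed
  qed
qed


lemma idt_scaled:
  assumes a: "\<alpha> > 0" and M: "prob_space M" and X: "is_process M X" and idt: "alpha_IDT \<alpha> M X"
    and j: "j \<ge> 1" and s: "s > 0"
  shows "eq_law M (\<lambda>t. X (real j powr (1/\<alpha>) * (t / s))) (PiM {..<j} (\<lambda>_. M))
     (\<lambda>t \<omega>. \<Sum>i<j. X (t / s) (\<omega> i))"
proof -
  have e: "eq_law M (\<lambda>t. X (real j powr (1/\<alpha>) * t)) (PiM {..<j} (\<lambda>_. M)) (\<lambda>t \<omega>. \<Sum>i<j. X t (\<omega> i))"
    using idt j unfolding alpha_IDT_def by auto
  have p1: "is_process M (\<lambda>t. X (real j powr (1/\<alpha>) * t))"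
    by (rule is_process_time[OF X]) simp
  show ?thesis
    using eq_law_time_change[OF p1 is_process_sum[OF X] e, of "\<lambda>t. t / s"] s by simp
qed

lemma rat_core:
  fixes m k :: nat and X :: "real \<Rightarrow> 'a \<Rightarrow> 'b::euclidean_space"
  assumes a: "\<alpha> > 0" and M: "prob_space M" and X: "is_process M X" and idt: "alpha_IDT \<alpha> M X"
    and m: "m \<ge> 1" and k: "k \<ge> 1"
  defines "s \<equiv> real (m+k) powr (1/\<alpha>)"
  shows "eq_law M X (M \<Otimes>\<^sub>M M) (\<lambda>t (x,y). X (real m powr (1/\<alpha>) / s * t) x + X (real k powr (1/\<alpha>) / s * t) y)"
proof -
  have s: "s > 0" unfolding s_def using m by simp
  have Y: "is_process M (\<lambda>t. X (t / s))" by (rule is_process_time[OF X]) (use s in simp)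
  have PM: "\<And>j. prob_space (PiM {..<j} (\<lambda>_. M))" by (rule prob_space_PiM) (use M in auto)
  have en: "eq_law M (\<lambda>t. X (real (m+k) powr (1/\<alpha>) * (t / s))) (PiM {..<m+k} (\<lambda>_. M))
     (\<lambda>t \<omega>. \<Sum>i<m+k. X (t / s) (\<omega> i))"
    by (rule idt_scaled[OF a M X idt _ s]) (use m in simp)
  moreover have "(\<lambda>t. X (real (m+k) powr (1/\<alpha>) * (t / s))) = X"
    using s unfolding s_def by (auto simp: fun_eq_iff)
  ultimately have e1: "eq_law M X (PiM {..<m+k} (\<lambda>_. M)) (\<lambda>t \<omega>. \<Sum>i<m+k. X (t / s) (\<omega> i))" by simp
  have em: "eq_law M (\<lambda>t. X (real m powr (1/\<alpha>) * (t / s))) (PiM {..<m} (\<lambda>_. M))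
     (\<lambda>t \<omega>. \<Sum>i<m. X (t / s) (\<omega> i))"
    by (rule idt_scaled[OF a M X idt m s])
  have ek: "eq_law M (\<lambda>t. X (real k powr (1/\<alpha>) * (t / s))) (PiM {..<k} (\<lambda>_. M))
     (\<lambda>t \<omega>. \<Sum>i<k. X (t / s) (\<omega> i))"
    by (rule idt_scaled[OF a M X idt k s])
  have pm: "is_process M (\<lambda>t. X (real m powr (1/\<alpha>) * (t / s)))" by (rule is_process_time[OF X]) (use s in simp)
  have pk: "is_process M (\<lambda>t. X (real k powr (1/\<alpha>) * (t / s)))" by (rule is_process_time[OF X]) (use s in simp)
  have e2: "eq_law (PiM {..<m} (\<lambda>_. M) \<Otimes>\<^sub>M PiM {..<k} (\<lambda>_. M))
     (\<lambda>t (x,y). (\<Sum>i<m. X (t / s) (x i)) + (\<Sum>i<k. X (t / s) (y i)))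
     (M \<Otimes>\<^sub>M M) (\<lambda>t (x,y). X (real m powr (1/\<alpha>) * (t / s)) x + X (real k powr (1/\<alpha>) * (t / s)) y)"
    by (rule eq_law_pair[OF PM PM M M is_process_sum[OF Y] is_process_sum[OF Y] pm pk
          eq_law_sym[OF em] eq_law_sym[OF ek]])
  note e3 = eq_law_split[OF M Y, of m k]
  have "eq_law M X (M \<Otimes>\<^sub>M M) (\<lambda>t (x,y). X (real m powr (1/\<alpha>) * (t / s)) x + X (real k powr (1/\<alpha>) * (t / s)) y)"
    using eq_law_trans[OF eq_law_trans[OF e1 eq_law_sym[OF e3]] e2] by simp
  then show ?thesis by (simp add: mult.commute)
qed



lemma meas_fst:
  assumes "prob_space M1" "prob_space M2" "S \<in> sets M1"
  shows "measure (M1 \<Otimes>\<^sub>M M2) (S \<times> space M2) = measure M1 S"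
proof -
  interpret p2: prob_space M2 by fact
  interpret p1: prob_space M1 by fact
  have "emeasure (M1 \<Otimes>\<^sub>M M2) (S \<times> space M2) = emeasure M1 S * emeasure M2 (space M2)"
    using assms by (intro p2.emeasure_pair_measure_Times) auto
  then show ?thesis by (simp add: measure_def p1.emeasure_space_1 p2.emeasure_space_1)
qed

lemma meas_snd:
  assumes "prob_space M1" "prob_space M2" "S \<in> sets M2"
  shows "measure (M1 \<Otimes>\<^sub>M M2) (space M1 \<times> S) = measure M2 S"
proof -
  interpret p2: prob_space M2 by fact
  interpret p1: prob_space M1 by fact
  have "emeasure (M1 \<Otimes>\<^sub>M M2) (space M1 \<times> S) = emeasure M1 (space M1) * emeasure M2 S"
    using assms by (intro p2.emeasure_pair_measure_Times) auto
  then show ?thesis by (simp add: measure_def p1.emeasure_space_1 p2.emeasure_space_1)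
qed

lemma bound_pair:
  fixes A A' B B' :: "'a \<Rightarrow> 'b::euclidean_space"
  assumes M: "prob_space M" and m: "A \<in> borel_measurable M" "A' \<in> borel_measurable M"
    "B \<in> borel_measurable M" "B' \<in> borel_measurable M"
  shows "measure (M \<Otimes>\<^sub>M M) {p\<in>space (M \<Otimes>\<^sub>M M). dist ((\<lambda>(x,y). A x + B y) p) ((\<lambda>(x,y). A' x + B' y) p) > e}
    \<le> measure M {x\<in>space M. dist (A x) (A' x) > e/2} + measure M {x\<in>space M. dist (B x) (B' x) > e/2}"
proof -
  interpret pp: prob_space "M \<Otimes>\<^sub>M M" by (rule prob_space_pair[OF M M])
  define SA where "SA = {x\<in>space M. dist (A x) (A' x) > e/2}"
  define SB where "SB = {x\<in>space M. dist (B x) (B' x) > e/2}"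
  have sA: "SA \<in> sets M" unfolding SA_def using m by measurable
  have sB: "SB \<in> sets M" unfolding SB_def using m by measurable
  have sub: "{p\<in>space (M \<Otimes>\<^sub>M M). dist ((\<lambda>(x,y). A x + B y) p) ((\<lambda>(x,y). A' x + B' y) p) > e}
      \<subseteq> (SA \<times> space M) \<union> (space M \<times> SB)"
  proof (rule subsetI)
    fix p assume p: "p \<in> {p\<in>space (M \<Otimes>\<^sub>M M). dist ((\<lambda>(x,y). A x + B y) p) ((\<lambda>(x,y). A' x + B' y) p) > e}"
    obtain x y where pxy: "p = (x,y)" by force
    have xy: "x \<in> space M" "y \<in> space M" using p pxy by (auto simp: space_pair_measure)
    have d: "e < dist (A x + B y) (A' x + B' y)" using p pxy by auto
    show "p \<in> (SA \<times> space M) \<union> (space M \<times> SB)"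
    proof (cases "y \<in> SB")
      case True then show ?thesis using xy pxy by auto
    next
      case False
      have "dist (A x + B y) (A' x + B' y) \<le> dist (A x) (A' x) + dist (B y) (B' y)" by (rule dist_triangle_add)
      moreover have "dist (B y) (B' y) \<le> e/2" using False xy unfolding SB_def by auto
      ultimately have "dist (A x) (A' x) > e/2" using d by simp
      then show ?thesis using xy pxy unfolding SA_def by auto
    qed
  qed
  have "measure (M \<Otimes>\<^sub>M M) {p\<in>space (M \<Otimes>\<^sub>M M). dist ((\<lambda>(x,y). A x + B y) p) ((\<lambda>(x,y). A' x + B' y) p) > e}
      \<le> measure (M \<Otimes>\<^sub>M M) ((SA \<times> space M) \<union> (space M \<times> SB))"
    by (rule pp.finite_measure_mono[OF sub]) (use sA sB in auto)
  also have "\<dots> \<le> measure (M \<Otimes>\<^sub>M M) (SA \<times> space M) + measure (M \<Otimes>\<^sub>M M) (space M \<times> SB)"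
    by (rule measure_Un_le) (use sA sB in auto)
  also have "\<dots> = measure M SA + measure M SB"
    using meas_fst[OF M M sA] meas_snd[OF M M sB] by simp
  finally show ?thesis unfolding SA_def SB_def .
qed

lemma stoch_seq:
  assumes sc: "stoch_continuous M X" and u: "u \<ge> 0" and e: "e > 0"
    and x: "x \<longlonglongrightarrow> u" "\<And>n. x n \<ge> 0"
  shows "(\<lambda>n. measure M {\<omega>\<in>space M. dist (X (x n) \<omega>) (X u \<omega>) > e}) \<longlonglongrightarrow> 0"
proof -
  define f where "f s = measure M {\<omega>\<in>space M. dist (X s \<omega>) (X u \<omega>) > e}" for s
  have fu: "f u = 0" unfolding f_def using e by simp
  have "(f \<longlongrightarrow> 0) (at u within {0..})" unfolding f_def using sc u e unfolding stoch_continuous_def by auto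
  then have "continuous (at u within {0..}) f" unfolding continuous_within fu .
  then have "(f \<circ> x) \<longlonglongrightarrow> f u" using x unfolding continuous_within_sequentially by auto
  then show ?thesis unfolding fu by (simp add: f_def o_def)
qed



lemma gen_core:
  fixes X :: "real \<Rightarrow> 'a \<Rightarrow> 'b::euclidean_space"
  assumes a: "\<alpha> > 0" and M: "prob_space M" and X: "is_process M X" and idt: "alpha_IDT \<alpha> M X"
    and sc: "stoch_continuous M X" and c: "0 < c" "c < 1"
  defines "d \<equiv> (1 - c powr \<alpha>) powr (1/\<alpha>)"
  shows "eq_law M X (M \<Otimes>\<^sub>M M) (\<lambda>t (x,y). X (c * t) x + X (d * t) y)"
proof -
  define A where "A = c powr \<alpha>"
  have A0: "0 < A" unfolding A_def using c by simp
  have A1: "A < 1" unfolding A_def using c a powr_less_mono2[of \<alpha> c 1] by simp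
  define N0 :: nat where "N0 = nat \<lceil>1 / A\<rceil> + 1"
  define n :: "nat \<Rightarrow> nat" where "n j = j + N0" for j
  define m :: "nat \<Rightarrow> nat" where "m j = nat \<lfloor>real (n j) * A\<rfloor>" for j
  define k :: "nat \<Rightarrow> nat" where "k j = n j - m j" for j
  have nA: "real (n j) * A \<ge> 1" for j
  proof -
    have "1 / A \<le> real N0" unfolding N0_def by linarith
    also have "\<dots> \<le> real (n j)" unfolding n_def by simp
    finally show ?thesis using A0 by (simp add: field_simps)
  qed
  have m1: "m j \<ge> 1" for j unfolding m_def using nA[of j] by (simp add: le_nat_floor)
  have mle: "real (m j) \<le> real (n j) * A" for j unfolding m_def using nA[of j] by simp
  have mge: "real (m j) > real (n j) * A - 1" for j unfolding m_def using nA[of j] by linarith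
  have npos: "real (n j) > 0" for j unfolding n_def N0_def by simp
  have mn: "m j < n j" for j
  proof -
    have "real (n j) * A < real (n j)" using A1 npos[of j] by simp
    then have "real (m j) < real (n j)" using mle[of j] by linarith
    then show ?thesis by simp
  qed
  have k1: "k j \<ge> 1" for j unfolding k_def using mn[of j] by simp
  have mk: "m j + k j = n j" for j unfolding k_def using mn[of j] by simp
  define q where "q j = real (m j) / real (n j)" for j
  have q_lim: "q \<longlonglongrightarrow> A"
  proof (rule tendsto_sandwich[where f="\<lambda>j. A - 1 / real (n j)" and h="\<lambda>j. A"])
    have lo: "A - 1 / real (n j) \<le> q j" for j
    proof -
      have "(real (n j) * A - 1) / real (n j) \<le> real (m j) / real (n j)"
        using mge[of j] npos[of j] by (intro divide_right_mono) auto
      then show ?thesis using npos[of j] by (simp add: q_def diff_divide_distrib)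
    qed
    have hi: "q j \<le> A" for j
    proof -
      have "real (m j) / real (n j) \<le> (real (n j) * A) / real (n j)"
        using mle[of j] npos[of j] by (intro divide_right_mono) auto
      then show ?thesis using npos[of j] by (simp add: q_def)
    qed
    show "\<forall>\<^sub>F j in sequentially. A - 1 / real (n j) \<le> q j" using lo by (auto intro!: always_eventually)
    show "\<forall>\<^sub>F j in sequentially. q j \<le> A" using hi by (auto intro!: always_eventually)
    have "(\<lambda>j. 1 / real (n j)) \<longlonglongrightarrow> 0" unfolding n_def
      using LIMSEQ_ignore_initial_segment[OF lim_inverse_n', of N0] by simp
    then show "(\<lambda>j. A - 1 / real (n j)) \<longlonglongrightarrow> A" using tendsto_diff[OF tendsto_const] by fastforce
  qed simp
  define cs where "cs j = real (m j) powr (1/\<alpha>) / real (m j + k j) powr (1/\<alpha>)" for j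
  define ds where "ds j = real (k j) powr (1/\<alpha>) / real (m j + k j) powr (1/\<alpha>)" for j
  have cs_eq: "cs j = q j powr (1/\<alpha>)" for j unfolding cs_def q_def mk by (simp add: powr_divide)
  have ds_eq: "ds j = (1 - q j) powr (1/\<alpha>)" for j
  proof -
    have "real (k j) / real (n j) = 1 - q j" unfolding q_def k_def using mn[of j] npos[of j]
      by (simp add: of_nat_diff field_simps)
    then show ?thesis unfolding ds_def mk by (simp add: powr_divide[symmetric])
  qed
  have c_eq: "A powr (1/\<alpha>) = c" unfolding A_def using c a by (simp add: powr_powr)
  have cs_lim: "cs \<longlonglongrightarrow> c" unfolding cs_eq[abs_def] c_eq[symmetric]
    by (rule tendsto_powr[OF q_lim tendsto_const]) (use A0 in simp)
  have ds_lim: "ds \<longlonglongrightarrow> d" unfolding ds_eq[abs_def] d_def A_def[symmetric]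
    by (rule tendsto_powr[OF tendsto_diff[OF tendsto_const q_lim] tendsto_const]) (use A1 in simp)
  have cs0: "cs j \<ge> 0" for j unfolding cs_def by simp
  have ds0: "ds j \<ge> 0" for j unfolding ds_def by simp
  have d0: "d \<ge> 0" unfolding d_def by simp
  have MM: "prob_space (M \<Otimes>\<^sub>M M)" by (rule prob_space_pair[OF M M])
  have Zp: "is_process (M \<Otimes>\<^sub>M M) (\<lambda>t (x,y). X (c * t) x + X (d * t) y)"
    by (rule is_process_pair; rule is_process_time[OF X]) (use c d0 in auto)
  have Zsp: "is_process (M \<Otimes>\<^sub>M M) (\<lambda>t (x,y). X (cs j * t) x + X (ds j * t) y)" for j
    by (rule is_process_pair; rule is_process_time[OF X]) (use cs0 ds0 in auto)
  show ?thesis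
  proof (rule limit_law[OF M MM X Zp Zsp])
    fix j show "eq_law M X (M \<Otimes>\<^sub>M M) (\<lambda>t (x,y). X (cs j * t) x + X (ds j * t) y)"
      unfolding cs_def ds_def by (rule rat_core[OF a M X idt m1 k1])
  next
    fix t e :: real assume t: "t \<ge> 0" and e: "e > 0"
    have Xm: "X s \<in> borel_measurable M" if "s \<ge> 0" for s using X that unfolding is_process_def by auto
    have l1: "(\<lambda>j. measure M {\<omega>\<in>space M. dist (X (cs j * t) \<omega>) (X (c * t) \<omega>) > e/2}) \<longlonglongrightarrow> 0"
      by (rule stoch_seq[OF sc]) (use t e c cs0 in \<open>auto intro!: tendsto_mult cs_lim\<close>)
    have l2: "(\<lambda>j. measure M {\<omega>\<in>space M. dist (X (ds j * t) \<omega>) (X (d * t) \<omega>) > e/2}) \<longlonglongrightarrow> 0"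
      by (rule stoch_seq[OF sc]) (use t e d0 ds0 in \<open>auto intro!: tendsto_mult ds_lim\<close>)
    show "(\<lambda>j. measure (M \<Otimes>\<^sub>M M) {\<omega>\<in>space (M \<Otimes>\<^sub>M M).
        dist ((\<lambda>t (x,y). X (cs j * t) x + X (ds j * t) y) t \<omega>) ((\<lambda>t (x,y). X (c * t) x + X (d * t) y) t \<omega>) > e}) \<longlonglongrightarrow> 0"
    proof (rule Lim_null_comparison[OF _ tendsto_add_zero[OF l1 l2]])
      show "\<forall>\<^sub>F j in sequentially. norm (measure (M \<Otimes>\<^sub>M M) {\<omega>\<in>space (M \<Otimes>\<^sub>M M).
        dist ((\<lambda>t (x,y). X (cs j * t) x + X (ds j * t) y) t \<omega>) ((\<lambda>t (x,y). X (c * t) x + X (d * t) y) t \<omega>) > e})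
        \<le> measure M {\<omega>\<in>space M. dist (X (cs j * t) \<omega>) (X (c * t) \<omega>) > e/2} +
          measure M {\<omega>\<in>space M. dist (X (ds j * t) \<omega>) (X (d * t) \<omega>) > e/2}"
      proof (rule always_eventually, rule allI)
        fix j
        show "norm (measure (M \<Otimes>\<^sub>M M) {\<omega>\<in>space (M \<Otimes>\<^sub>M M).
        dist ((\<lambda>t (x,y). X (cs j * t) x + X (ds j * t) y) t \<omega>) ((\<lambda>t (x,y). X (c * t) x + X (d * t) y) t \<omega>) > e})
        \<le> measure M {\<omega>\<in>space M. dist (X (cs j * t) \<omega>) (X (c * t) \<omega>) > e/2} +
          measure M {\<omega>\<in>space M. dist (X (ds j * t) \<omega>) (X (d * t) \<omega>) > e/2}"
          using bound_pair[OF M Xm Xm Xm Xm, of "cs j * t" "c * t" "ds j * t" "d * t" e] t c cs0 ds0 d0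
          by simp
      qed
    qed
  qed
qed



definition hyps :: "real \<Rightarrow> 'a measure \<Rightarrow> (real \<Rightarrow> 'a \<Rightarrow> 'b::euclidean_space) \<Rightarrow> bool" where
  "hyps \<alpha> M X \<longleftrightarrow> prob_space M \<and> is_process M X \<and> stoch_continuous M X \<and> alpha_IDT \<alpha> M X"

lemma eq_law_refl: "eq_law M X M X" unfolding eq_law_def by simp

lemma vecd_meas:
  assumes X: "is_process M X" and d: "d \<ge> 0"
  shows "(\<lambda>\<omega>. \<lambda>t\<in>{0..}. X (d * t) \<omega>) \<in> measurable M (paths :: (real \<Rightarrow> 'b::euclidean_space) measure)"
  unfolding paths_def using X d unfolding is_process_def by (intro measurable_restrict) auto

lemma coord_process:
  assumes "sets Q = sets (paths :: (real \<Rightarrow> 'b::euclidean_space) measure)"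
  shows "is_process Q (\<lambda>t u. u t :: 'b)"
  unfolding is_process_def
proof safe
  fix t :: real assume "t \<ge> 0"
  then have "(\<lambda>u. u t) \<in> measurable (paths :: (real \<Rightarrow> 'b) measure) borel"
    unfolding paths_def by (intro measurable_component_singleton) auto
  then show "(\<lambda>u. u t) \<in> borel_measurable Q" by (subst measurable_cong_sets[OF assms refl])
qed

lemma hyps_Q:
  fixes X :: "real \<Rightarrow> 'a \<Rightarrow> 'b::euclidean_space"
  assumes a: "\<alpha> > 0" and h: "hyps \<alpha> M X" and d: "d \<ge> 0"
  defines "Q \<equiv> distr M (paths :: (real \<Rightarrow> 'b) measure) (\<lambda>\<omega>. \<lambda>t\<in>{0..}. X (d * t) \<omega>)"
  shows "hyps \<alpha> Q (\<lambda>t u. u t)" and "eq_law M (\<lambda>t. X (d * t)) Q (\<lambda>t u. u t)"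
    and "sets Q = sets paths"
proof -
  have M: "prob_space M" and X: "is_process M X" and sc: "stoch_continuous M X" and idt: "alpha_IDT \<alpha> M X"
    using h unfolding hyps_def by auto
  note vm = vecd_meas[OF X d]
  have sQ: "sets Q = sets paths" unfolding Q_def by simp
  then show "sets Q = sets paths" .
  have pQ: "prob_space Q" unfolding Q_def by (rule prob_space.prob_space_distr[OF M vm])
  have cQ: "is_process Q (\<lambda>t u. u t)" by (rule coord_process[OF sQ])
  have Yp: "is_process M (\<lambda>t. X (d * t))" by (rule is_process_time[OF X]) (use d in simp)
  have eY: "eq_law M (\<lambda>t. X (d * t)) Q (\<lambda>t u. u t)"
  proof (rule eq_law_preserving[OF _ _ cQ])
    show vmQ: "(\<lambda>\<omega>. \<lambda>t\<in>{0..}. X (d * t) \<omega>) \<in> measurable M Q"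
      using vm by (subst measurable_cong_sets[OF refl sQ])
    show "distr M Q (\<lambda>\<omega>. \<lambda>t\<in>{0..}. X (d * t) \<omega>) = Q"
      unfolding Q_def by (rule distr_cong) (simp_all add: sQ[unfolded Q_def])
  qed auto
  then show "eq_law M (\<lambda>t. X (d * t)) Q (\<lambda>t u. u t)" .
  have scQ: "stoch_continuous Q (\<lambda>t u. u t)"
    unfolding stoch_continuous_def
  proof safe
    fix t e :: real assume t: "t \<ge> 0" and e: "e > 0"
    define h where "h r = measure M {\<omega>\<in>space M. dist (X r \<omega>) (X (d * t) \<omega>) > e}" for r
    have h0: "h (d * t) = 0" unfolding h_def using e by simp
    have "(h \<longlongrightarrow> 0) (at (d * t) within {0..})" unfolding h_def using sc t d e unfolding stoch_continuous_def by auto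
    then have hc: "continuous (at (d * t) within {0..}) h" unfolding continuous_within h0 .
    have lc: "continuous (at t within {0..}) (\<lambda>s. d * s)" by (intro continuous_intros)
    have "continuous (at t within {0..}) (h \<circ> (\<lambda>s. d * s))"
      by (rule continuous_within_compose[OF lc continuous_within_subset[OF hc]]) (use d in auto)
    then have lim: "((\<lambda>s. h (d * s)) \<longlongrightarrow> 0) (at t within {0..})"
      unfolding continuous_within o_def h0 .
    have eqm: "measure Q {u\<in>space Q. dist (u s) (u t) > e} = h (d * s)" if s: "s \<ge> 0" for s
    proof -
      have ms: "{u\<in>space paths. dist (u s) (u t) > e} \<in> sets (paths :: (real \<Rightarrow> 'b) measure)"
      proof -
        have "(\<lambda>u::real\<Rightarrow>'b. u s) \<in> borel_measurable paths" "(\<lambda>u::real\<Rightarrow>'b. u t) \<in> borel_measurable paths"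
          unfolding paths_def using s t by (auto intro!: measurable_component_singleton)
        then show ?thesis by measurable
      qed
      have "measure Q {u\<in>space Q. dist (u s) (u t) > e} = measure Q {u\<in>space paths. dist (u s) (u t) > e}"
        using sets_eq_imp_space_eq[OF sQ] by simp
      also have "\<dots> = measure M ((\<lambda>\<omega>. \<lambda>t\<in>{0..}. X (d * t) \<omega>) -` {u\<in>space paths. dist (u s) (u t) > e} \<inter> space M)"
        unfolding Q_def by (rule measure_distr[OF vm ms])
      also have "\<dots> = h (d * s)" unfolding h_def using s t vm
        by (intro arg_cong[where f="measure M"]) (auto simp: measurable_def)
      finally show ?thesis .
    qed
    have ev: "\<forall>\<^sub>F s in at t within {0..}. h (d * s) = measure Q {u\<in>space Q. dist (u s) (u t) > e}"
      unfolding eventually_at_filter using eqm by (auto intro!: always_eventually)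
    show "((\<lambda>s. measure Q {u\<in>space Q. dist (u s) (u t) > e}) \<longlongrightarrow> 0) (at t within {0..})"
      by (rule Lim_transform_eventually[OF lim ev])
  qed
  have idtQ: "alpha_IDT \<alpha> Q (\<lambda>t u. u t)"
    unfolding alpha_IDT_def
  proof safe
    fix n :: nat assume n: "n \<ge> 1"
    define r where "r = real n powr (1/\<alpha>)"
    have r0: "r \<ge> 0" unfolding r_def by simp
    have e1: "eq_law Q (\<lambda>t u. u (r * t)) M (\<lambda>t. X (d * (r * t)))"
      using eq_law_time_change[OF cQ Yp eq_law_sym[OF eY], of "\<lambda>t. r * t"] r0 by simp
    have eI: "eq_law M (\<lambda>t. X (r * t)) (PiM {..<n} (\<lambda>_. M)) (\<lambda>t \<omega>. \<Sum>i<n. X t (\<omega> i))"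
      using idt n unfolding alpha_IDT_def r_def by auto
    have pr: "is_process M (\<lambda>t. X (r * t))" by (rule is_process_time[OF X]) (use r0 in simp)
    have e2: "eq_law M (\<lambda>t. X (r * (d * t))) (PiM {..<n} (\<lambda>_. M)) (\<lambda>t \<omega>. \<Sum>i<n. X (d * t) (\<omega> i))"
      using eq_law_time_change[OF pr is_process_sum[OF X] eI, of "\<lambda>t. d * t"] d by simp
    have e2': "eq_law M (\<lambda>t. X (d * (r * t))) (PiM {..<n} (\<lambda>_. M)) (\<lambda>t \<omega>. \<Sum>i<n. X (d * t) (\<omega> i))"
      using e2 by (simp add: ac_simps)
    obtain n' where n': "n = Suc n'" using n by (cases n) auto
    have e3: "eq_law (PiM {..<n} (\<lambda>_. M)) (\<lambda>t \<omega>. \<Sum>i<n. X (d * t) (\<omega> i))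
                  (PiM {..<n} (\<lambda>_. Q)) (\<lambda>t \<omega>. \<Sum>i<n. \<omega> i t)"
      unfolding n' by (rule eq_law_sum[OF M pQ Yp cQ eY])
    show "eq_law Q (\<lambda>t u. u (real n powr (1 / \<alpha>) * t)) (PiM {..<n} (\<lambda>_. Q)) (\<lambda>t \<omega>. \<Sum>i<n. \<omega> i t)"
      using eq_law_trans[OF eq_law_trans[OF e1 e2'] e3] unfolding r_def .
  qed
  show "hyps \<alpha> Q (\<lambda>t u. u t)" unfolding hyps_def using pQ cQ scQ idtQ by auto
qed

lemma key_step:
  fixes X :: "real \<Rightarrow> 'a \<Rightarrow> 'b::euclidean_space"
  assumes a: "\<alpha> > 0" and h: "hyps \<alpha> M X" and c: "c \<in> {0<..<1}"
  shows "\<exists>Q. TSD_residual c M X Q \<and> hyps \<alpha> Q (\<lambda>t u. u t)"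
proof -
  have M: "prob_space M" and X: "is_process M X" and sc: "stoch_continuous M X" and idt: "alpha_IDT \<alpha> M X"
    using h unfolding hyps_def by auto
  define d where "d = (1 - c powr \<alpha>) powr (1/\<alpha>)"
  have d0: "d \<ge> 0" unfolding d_def by simp
  define Q where "Q = distr M (paths :: (real \<Rightarrow> 'b) measure) (\<lambda>\<omega>. \<lambda>t\<in>{0..}. X (d * t) \<omega>)"
  have hQ: "hyps \<alpha> Q (\<lambda>t u. u t)" and eY: "eq_law M (\<lambda>t. X (d * t)) Q (\<lambda>t u. u t)"
    and sQ: "sets Q = sets paths"
    using hyps_Q[OF a h d0] unfolding Q_def by auto
  have pQ: "prob_space Q" and cQ: "is_process Q (\<lambda>t u. u t)" using hQ unfolding hyps_def by auto
  have g: "eq_law M X (M \<Otimes>\<^sub>M M) (\<lambda>t (x,y). X (c * t) x + X (d * t) y)"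
    unfolding d_def by (rule gen_core[OF a M X idt sc]) (use c in auto)
  have pc: "is_process M (\<lambda>t. X (c * t))" by (rule is_process_time[OF X]) (use c in auto)
  have pd: "is_process M (\<lambda>t. X (d * t))" by (rule is_process_time[OF X]) (use d0 in auto)
  have p: "eq_law (M \<Otimes>\<^sub>M M) (\<lambda>t (x,y). X (c * t) x + X (d * t) y) (M \<Otimes>\<^sub>M Q) (\<lambda>t (x,y). X (c * t) x + y t)"
    using eq_law_pair[OF M M M pQ pc pd pc cQ eq_law_refl eY] by simp
  have "TSD_residual c M X Q"
    unfolding TSD_residual_def using pQ sQ eq_law_trans[OF g p] by simp
  then show ?thesis using hQ by auto
qed

lemma tsd_all:
  fixes Q :: "(real \<Rightarrow> 'b::euclidean_space) measure"
  assumes a: "\<alpha> > 0" and h: "hyps \<alpha> Q (\<lambda>t u. u t)"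
  shows "tsd_paths n Q"
  using h
proof (induction n arbitrary: Q)
  case 0 then show ?case by simp
next
  case (Suc n)
  show ?case
  proof (simp only: tsd_paths.simps, intro ballI)
    fix c :: real assume c: "c \<in> {0<..<1}"
    obtain R where "TSD_residual c Q (\<lambda>t u. u t) R" "hyps \<alpha> R (\<lambda>t u. u t)"
      using key_step[OF a Suc.prems c] by blast
    then show "\<exists>R. TSD_residual c Q (\<lambda>t u. u t) R \<and> tsd_paths n R" using Suc.IH by blast
  qed
qed

theorem mainTheorem6:
  fixes \<alpha> :: real and M :: "'a measure" and X :: "real \<Rightarrow> 'a \<Rightarrow> 'b::euclidean_space"
  assumes "\<alpha> > 0"
    and "prob_space M"
    and "is_process M X"
    and "stoch_continuous M X"
    and "alpha_IDT \<alpha> M X"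
  shows "TSD_infinite_order M X"
proof -
  have h: "hyps \<alpha> M X" unfolding hyps_def using assms by auto
  show ?thesis
    unfolding TSD_infinite_order_def TSD_order_def
  proof (intro allI impI conjI ballI)
    fix m :: nat and c :: real assume "m \<ge> 1" and c: "c \<in> {0<..<1}"
    obtain Q where "TSD_residual c M X Q" "hyps \<alpha> Q (\<lambda>t u. u t)" using key_step[OF assms(1) h c] by blast
    then show "\<exists>Q. TSD_residual c M X Q \<and> tsd_paths (m - 1) Q" using tsd_all[OF assms(1)] by blast
  qed
qed


end
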